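(* Let $\mathbf v\in\mathbb Z^4$ be nonzero and $\mathcal A[\mathbf v]=\{\mathbf U\mathbf v:\mathbf U\in\mathcal A\}$. (1) If $\mathcal A[\mathbf v]$ contains an exceptional quadruple, then it contains elements $\mathbf v_1,\mathbf v_2$ with $L(\mathbf v_1)>0$ and $L(\mathbf v_2)<0$. (2) There exist orbits $\mathcal A[\mathbf v]$ containing more than one exceptional quadruple. (3) Exceptional quadruples $\mathbf a$ with $Q_{\mathcal D}(\mathbf a)=k$ exist only for $k\ge1$; for each $k\ge1$ there are only finitely many exceptional quadruples $\mathbf a$ with $Q_{\mathcal D}(\mathbf a)=k$, and all satisfy $H(\mathbf a)^2\le 2k^2$.
   Context: $Q_{\mathcal D}(a,b,c,d)=2(a^2+b^2+c^2+d^2)-(a+b+c+d)^2$; $H(\mathbf a)=(a^2+b^2+c^2+d^2)^{1/2}$; $L(\mathbf a)=a+b+c+d$; $|\mathbf a|=|a|+|b|+|c|+|d|$. $\mathbf S_i$ ($i=1,\dots,4$) is the integer matrix replacing the $i$-th coordinate $a_i$ of a quadruple by $2\sum_{j\ne i}a_j-a_i$, other coordinates fixed; the Apollonian group $\mathcal A$ is the subgroup of $GL(4,\mathbb Z)$ they generate. An integer quadruple is reduced if no $\mathbf S_i$ strictly decreases $|\cdot|$. A reduced quadruple ordered as $a\le b\le c\le d$ with $L\ge0$ is exceptional if $a+b+c\le 0<d$ (and a root quadruple if $a+b+c\ge d>0$); a reduced quadruple with $L<0$ is exceptional iff $(-d,-c,-b,-a)$ is. *)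

theory Defs
  imports "HOL-Analysis.Analysis"
begin

text \<open>Integer quadruples are vectors in int^4, indexed by the numeral type 4
  (indices 0,1,2,3).\<close>

type_synonym quad = "int ^ 4"

definition QD :: "quad \<Rightarrow> int" where
  "QD v = 2 * (\<Sum>i\<in>UNIV. (v $ i)^2) - (\<Sum>i\<in>UNIV. v $ i)^2"

definition Hh :: "quad \<Rightarrow> real" where
  "Hh v = sqrt (real_of_int (\<Sum>i\<in>UNIV. (v $ i)^2))"

definition LL :: "quad \<Rightarrow> int" where
  "LL v = (\<Sum>i\<in>UNIV. v $ i)"

definition norm1 :: "quad \<Rightarrow> int" where
  "norm1 v = (\<Sum>i\<in>UNIV. \<bar>v $ i\<bar>)"

definition Smat :: "4 \<Rightarrow> int ^ 4 ^ 4" where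
  "Smat i = (\<chi> r c. if r = i then (if c = i then -1 else 2)
                     else (if r = c then 1 else 0))"

text \<open>Since each S_i is an involution, the submonoid generated by the S_i is
  already closed under inverses, so it is the generated subgroup.\<close>
inductive_set apollonian_group :: "(int ^ 4 ^ 4) set" where
  id_in: "mat 1 \<in> apollonian_group"
| step: "U \<in> apollonian_group \<Longrightarrow> Smat i ** U \<in> apollonian_group"

definition orbit :: "quad \<Rightarrow> quad set" where
  "orbit v = {U *v v | U. U \<in> apollonian_group}"

definition reduced :: "quad \<Rightarrow> bool" where
  "reduced v \<longleftrightarrow> (\<forall>i. \<not> norm1 (Smat i *v v) < norm1 v)"

definition sorted_entries :: "quad \<Rightarrow> int list" where
  "sorted_entries v = sort [v $ 0, v $ 1, v $ 2, v $ 3]"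

definition exc_cond :: "quad \<Rightarrow> bool" where
  "exc_cond v \<longleftrightarrow> (let s = sorted_entries v in
      s ! 0 + s ! 1 + s ! 2 \<le> 0 \<and> 0 < s ! 3)"

text \<open>For L(v) < 0, v is exceptional iff (-d,-c,-b,-a), i.e. -v reordered, is.\<close>
definition exceptional :: "quad \<Rightarrow> bool" where
  "exceptional v \<longleftrightarrow> reduced v \<and>
     (if LL v \<ge> 0 then exc_cond v else (reduced (- v) \<and> exc_cond (- v)))"

end

theory Submission
  imports Defs
begin


lemma S_comp: "(Smat j *v v) $ i = (if i = j then 2 * (LL v - v $ j) - v $ j else v $ i)"
proof (cases "i = j")
  case True
  have "(Smat j *v v) $ i = (\<Sum>k\<in>UNIV. 2 * v $ k - (if k = j then 3 * v $ k else 0))"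
    unfolding matrix_vector_mult_def Smat_def using True by (auto intro!: sum.cong)
  also have "\<dots> = 2 * LL v - 3 * v $ j"
    by (simp add: sum_subtractf LL_def sum_distrib_left[symmetric])
  finally show ?thesis using True by simp
next
  case False
  have "(Smat j *v v) $ i = (\<Sum>k\<in>UNIV. (if i = k then 1 else 0) * v $ k)"
    by (simp add: matrix_vector_mult_def Smat_def False)
  also have "\<dots> = (\<Sum>k\<in>UNIV. if i = k then v $ k else 0)"
    by (intro sum.cong) auto
  finally show ?thesis using False by simp
qed

lemma LL_S: "LL (Smat j *v v) = 3 * LL v - 4 * v $ j"
proof -
  have "LL (Smat j *v v) = (\<Sum>i\<in>UNIV. v $ i + (if i = j then 2 * (LL v - v $ j) - 2 * v $ j else 0))"
    unfolding LL_def S_comp by (auto intro!: sum.cong)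
  also have "\<dots> = 3 * LL v - 4 * v $ j"
    by (simp add: sum.distrib LL_def[symmetric])
  finally show ?thesis .
qed

lemma orbit_self: "v \<in> orbit v"
  unfolding orbit_def by (auto intro!: exI[of _ "mat 1"] apollonian_group.id_in)

lemma orbit_S: "w \<in> orbit v \<Longrightarrow> Smat j *v w \<in> orbit v"
  unfolding orbit_def by (auto simp: matrix_vector_mul_assoc intro!: apollonian_group.step)

lemma S_neg: "Smat j *v (- w) = - (Smat j *v w)"
  by (simp add: vec_eq_iff S_comp LL_def sum_negf)

lemma LL_neg: "LL (- v) = - LL v" by (simp add: LL_def sum_negf)
lemma QD_neg: "QD (- v) = QD v" by (simp add: QD_def LL_def sum_negf)
lemma norm1_neg: "norm1 (- v) = norm1 v" by (simp add: norm1_def)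
lemma Hh_neg: "Hh (- v) = Hh v" by (simp add: Hh_def)

lemma sum4: "sum f (UNIV::4 set) = f 0 + f 1 + f 2 + f 3"
proof -
  have U: "(UNIV::4 set) = {0,1,2,3}" using exhaust_4 by fastforce
  show ?thesis unfolding U by (simp add: ac_simps)
qed

lemma exc_j: assumes "exc_cond v" shows "\<exists>j. v $ j > 0 \<and> LL v - v $ j \<le> 0"
proof -
  define xs where "xs = [v $ 0, v $ 1, v $ 2, v $ 3]"
  define s where "s = sort xs"
  have len: "length s = 4" by (simp add: s_def xs_def)
  have "s ! 3 \<in> set s" using len by simp
  then have "s ! 3 \<in> set xs" by (simp add: s_def)
  then obtain j where j: "v $ j = s ! 3" unfolding xs_def by auto
  have "sum_list s = sum_list xs" unfolding s_def by (metis mset_sort sum_mset_sum_list)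
  moreover have "sum_list s = s!0 + s!1 + s!2 + s!3"
    using len by (cases s rule: list.exhaust; auto simp: length_Suc_conv numeral_eq_Suc)
  moreover have "sum_list xs = LL v" by (simp add: xs_def LL_def sum4)
  moreover have "s!0 + s!1 + s!2 \<le> 0 \<and> 0 < s!3"
    using assms unfolding exc_cond_def sorted_entries_def s_def xs_def Let_def by simp
  ultimately show ?thesis using j by (intro exI[of _ j]) auto
qed

definition sq :: "quad \<Rightarrow> int" where "sq v = (\<Sum>i\<in>UNIV. (v $ i)^2)"

lemma sq_neg: "sq (- v) = sq v" by (simp add: sq_def)
lemma sq_ge: "(v $ i)^2 \<le> sq v"
  unfolding sq_def by (rule member_le_sum) auto
lemma QD_sq: "QD v = 2 * sq v - (LL v)^2" by (simp add: QD_def sq_def LL_def)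

lemma QD_bound0: assumes "exc_cond v" "LL v \<ge> 0" shows "sq v \<le> QD v \<and> 1 \<le> sq v"
proof -
  obtain j where j: "v $ j > 0" "LL v - v $ j \<le> 0" using exc_j[OF assms(1)] by blast
  have "(LL v)^2 \<le> (v $ j)^2" using j assms(2) by (intro power_mono) auto
  moreover have "(v $ j)^2 \<le> sq v" by (rule sq_ge)
  moreover have "1 \<le> (v $ j)^2" using j by (simp add: one_le_power)
  ultimately show ?thesis unfolding QD_sq by linarith
qed

lemma QD_bound: assumes "exceptional v" shows "sq v \<le> QD v \<and> 1 \<le> sq v"
proof (cases "LL v \<ge> 0")
  case True
  then show ?thesis using assms QD_bound0 unfolding exceptional_def by auto
next
  case False
  then have "exc_cond (- v)" "LL (- v) \<ge> 0" using assms unfolding exceptional_def LL_neg by auto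
  from QD_bound0[OF this] show ?thesis by (simp add: sq_neg QD_neg)
qed

lemma part1: assumes "w \<in> orbit v" "exceptional w"
  shows "(\<exists>v1\<in>orbit v. LL v1 > 0) \<and> (\<exists>v2\<in>orbit v. LL v2 < 0)"
proof (cases "LL w \<ge> 0")
  case True
  then have ex: "exc_cond w" using assms(2) unfolding exceptional_def by auto
  obtain j where j: "w $ j > 0" "LL w - w $ j \<le> 0" using exc_j[OF ex] by blast
  have neg: "LL (Smat j *v w) < 0" using j by (simp add: LL_S)
  have pos: "\<exists>v1\<in>orbit v. LL v1 > 0"
  proof (cases "LL w > 0")
    case True then show ?thesis using assms(1) by blast
  next
    case False
    then have L0: "LL w = 0" using \<open>LL w \<ge> 0\<close> by simp
    have "\<exists>i. w $ i < 0"
    proof (rule ccontr)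
      assume "\<not> ?thesis"
      then have "w $ j \<le> LL w" unfolding LL_def by (intro member_le_sum) (auto simp: not_less)
      then show False using j L0 by simp
    qed
    then obtain i where "w $ i < 0" by blast
    then have "LL (Smat i *v w) > 0" using L0 by (simp add: LL_S)
    then show ?thesis using orbit_S[OF assms(1)] by blast
  qed
  then show ?thesis using neg orbit_S[OF assms(1)] by blast
next
  case False
  then have ex: "exc_cond (- w)" using assms(2) unfolding exceptional_def by auto
  obtain j where j: "(- w) $ j > 0" "LL (- w) - (- w) $ j \<le> 0" using exc_j[OF ex] by blast
  have "LL (Smat j *v (- w)) < 0" using j by (simp add: LL_S)
  then have "LL (Smat j *v w) > 0" by (simp add: S_neg LL_neg)
  then show ?thesis using False assms(1) orbit_S[OF assms(1)] by force
qed

lemma norm1_ge: "\<bar>v $ i\<bar> \<le> norm1 v"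
  unfolding norm1_def by (rule member_le_sum) auto

definition w1 :: quad where "w1 = (\<chi> i. if i = 3 then 1 else 0)"

lemma w1_norm: "norm1 w1 = 1" by (simp add: norm1_def sum4 w1_def)
lemma w1_LL: "LL w1 = 1" by (simp add: LL_def sum4 w1_def)

lemma w1_red: "reduced w1"
  unfolding reduced_def
proof
  fix i :: 4
  have "\<bar>(Smat i *v w1) $ 3\<bar> = 1"
    by (simp add: S_comp w1_LL) (simp add: w1_def)
  then show "\<not> norm1 (Smat i *v w1) < norm1 w1" using norm1_ge[of "Smat i *v w1" 3] w1_norm by simp
qed

lemma w1_red': "reduced (- w1)"
  using w1_red unfolding reduced_def by (simp add: S_neg norm1_neg)

lemma w1_exc_cond: "exc_cond w1"
  by (simp add: exc_cond_def sorted_entries_def w1_def)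

lemma w1_exc: "exceptional w1"
  unfolding exceptional_def using w1_red w1_exc_cond w1_LL by simp

lemma w1_exc': "exceptional (- w1)"
  unfolding exceptional_def using w1_red w1_red' w1_exc_cond w1_LL by (simp add: LL_neg)

lemma w1_S: "Smat 3 *v w1 = - w1"
  unfolding vec_eq_iff by (simp add: S_comp w1_LL) (simp add: w1_def)

lemma w1_neq: "w1 \<noteq> - w1"
proof
  assume "w1 = - w1"
  then have "LL w1 = LL (- w1)" by (rule arg_cong)
  then show False using w1_LL LL_neg[of w1] by simp
qed

lemma part2: "\<exists>v::quad. v \<noteq> 0 \<and>
            (\<exists>w1\<in>orbit v. \<exists>w2\<in>orbit v. w1 \<noteq> w2 \<and> exceptional w1 \<and> exceptional w2)"
proof -
  have a: "w1 \<noteq> 0" using w1_LL by (auto simp: LL_def)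
  have b: "- w1 \<in> orbit w1" using orbit_S[OF orbit_self[of w1], where j=3] w1_S by simp
  show ?thesis using a b w1_neq w1_exc w1_exc' orbit_self[of w1] by blast
qed

lemma abs_le_sq: "\<bar>x::int\<bar> \<le> x^2"
proof (cases "x = 0")
  case False
  then have "1 \<le> \<bar>x\<bar>" by simp
  then have "\<bar>x\<bar> * 1 \<le> \<bar>x\<bar> * \<bar>x\<bar>" by (intro mult_left_mono) auto
  then show ?thesis by (simp add: power2_eq_square)
qed simp

lemma part3: assumes "k \<ge> 1"
  shows "finite {a::quad. exceptional a \<and> QD a = k} \<and>
            (\<forall>a::quad. exceptional a \<and> QD a = k \<longrightarrow> (Hh a)^2 \<le> 2 * (real_of_int k)^2)"
proof
  have sub: "{a::quad. exceptional a \<and> QD a = k} \<subseteq> vec_lambda ` (PiE UNIV (\<lambda>_. {-k..k}))"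
  proof
    fix a :: quad assume "a \<in> {a::quad. exceptional a \<and> QD a = k}"
    then have "sq a \<le> k" using QD_bound by auto
    then have "\<forall>i. \<bar>a $ i\<bar> \<le> k"
      using sq_ge[of a] abs_le_sq by (meson order_trans)
    then have "\<forall>i. a $ i \<in> {-k..k}"
      by (metis abs_le_D1 abs_le_D2 atLeastAtMost_iff minus_le_iff)
    then have "(\<lambda>i. a $ i) \<in> PiE UNIV (\<lambda>_. {-k..k})" by auto
    then show "a \<in> vec_lambda ` (PiE UNIV (\<lambda>_. {-k..k}))"
      by (metis image_eqI vec_lambda_eta)
  qed
  show "finite {a::quad. exceptional a \<and> QD a = k}"
    by (rule finite_subset[OF sub]) (intro finite_imageI finite_PiE; simp)
  show "\<forall>a::quad. exceptional a \<and> QD a = k \<longrightarrow> (Hh a)^2 \<le> 2 * (real_of_int k)^2"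
  proof (intro allI impI)
    fix a assume a: "exceptional a \<and> QD a = k"
    then have s: "sq a \<le> k" "0 \<le> sq a" using QD_bound[of a] by auto
    have "(Hh a)^2 = real_of_int (sq a)" unfolding Hh_def sq_def[symmetric] using s by simp
    also have "\<dots> \<le> real_of_int k" using s by simp
    also have "\<dots> \<le> 2 * (real_of_int k)^2" using assms by (simp add: power2_eq_square)
    finally show "(Hh a)^2 \<le> 2 * (real_of_int k)^2" .
  qed
qed


theorem theorem3p4:
  shows "(\<forall>v::quad. v \<noteq> 0 \<longrightarrow> (\<exists>w\<in>orbit v. exceptional w) \<longrightarrow>
            (\<exists>v1\<in>orbit v. LL v1 > 0) \<and> (\<exists>v2\<in>orbit v. LL v2 < 0))
       \<and> (\<exists>v::quad. v \<noteq> 0 \<and>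
            (\<exists>w1\<in>orbit v. \<exists>w2\<in>orbit v. w1 \<noteq> w2 \<and> exceptional w1 \<and> exceptional w2))
       \<and> (\<forall>a::quad. exceptional a \<longrightarrow> QD a \<ge> 1)
       \<and> (\<forall>k::int. k \<ge> 1 \<longrightarrow>
            finite {a::quad. exceptional a \<and> QD a = k} \<and>
            (\<forall>a::quad. exceptional a \<and> QD a = k \<longrightarrow> (Hh a)^2 \<le> 2 * (real_of_int k)^2))"
  using part1 part2 QD_bound part3 by fastforce

end
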